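(* Let $d\ge 1$, $\eta>0$, $\sigma>0$ and $K>1$, and let $\mathcal{D}^*$ be the Gaussian mixture distribution on $\mathbb{R}^d\times\{-1,+1\}$ defined by $\Pr(y=+1)=\Pr(y=-1)=\tfrac12$, $\mu=(\eta,\dots,\eta)\in\mathbb{R}^d$, and $$\mathbf{x}\mid (y=+1)\sim\mathcal{N}(\mu,\sigma_+^2 I_d),\qquad \mathbf{x}\mid (y=-1)\sim\mathcal{N}(-\mu,\sigma_-^2 I_d),$$ where $\sigma_-=\sigma$ and $\sigma_+=K\sigma$. Consider linear classifiers $f(\mathbf{x})=\operatorname{sign}(\langle \omega,\mathbf{x}\rangle+b)$ with $\omega\in\mathbb{R}^d$, $b\in\mathbb{R}$, where $\operatorname{sign}(z)=1$ if $z\ge 0$ and $-1$ otherwise. Let $f_{nat}$ be a linear classifier minimizing the natural risk $\mathbf{R}_{nat}(f)=\Pr_{(\mathbf{x},y)\sim\mathcal{D}^*}(f(\mathbf{x})\neq y)$ over this class. Then the probability of correctly classifying class $-1$ is strictly larger than that of correctly classifying class $+1$: $$\Pr\big(f_{nat}(\mathbf{x})=-1\mid y=-1\big)\;>\;\Pr\big(f_{nat}(\mathbf{x})=+1\mid y=+1\big).$$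
   Context: The class $+1$ (with larger variance) is regarded as intrinsically more vulnerable. Class-wise natural risks are $\mathbf{R}^-_{nat}(f)=\Pr(f(\mathbf{x})=+1\mid y=-1)$ and $\mathbf{R}^+_{nat}(f)=\Pr(f(\mathbf{x})=-1\mid y=+1)$, and the class-wise correct-classification probabilities are $\mathbf{P}^-_{nat}(f)=1-\mathbf{R}^-_{nat}(f)$ and $\mathbf{P}^+_{nat}(f)=1-\mathbf{R}^+_{nat}(f)$. The claim is that $\mathbf{P}^-_{nat}(f_{nat})>\mathbf{P}^+_{nat}(f_{nat})$, i.e. a model's estimated probability of the true class is lower for the more vulnerable class. *)

theory Defs
  imports "HOL-Probability.Probability"
begin

text \<open>Isotropic Gaussian N(m, s^2 I_d) on R^d (d = CARD('d)), given by its density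
  w.r.t. Lebesgue measure: the product of one-dimensional normal densities.\<close>
definition gauss_iso :: "real^'d \<Rightarrow> real \<Rightarrow> (real^'d) measure" where
  "gauss_iso m s = density lborel (\<lambda>x. ennreal (\<Prod>i\<in>UNIV. normal_density (m$i) s (x$i)))"

definition lin_clf :: "real^'d \<Rightarrow> real \<Rightarrow> real^'d \<Rightarrow> int" where
  "lin_clf w b x = (if w \<bullet> x + b \<ge> 0 then 1 else -1)"

definition D_plus :: "real \<Rightarrow> real \<Rightarrow> real \<Rightarrow> (real^'d) measure" where
  "D_plus \<eta> \<sigma> K = gauss_iso (\<chi> i. \<eta>) (K * \<sigma>)"

definition D_minus :: "real \<Rightarrow> real \<Rightarrow> real \<Rightarrow> (real^'d) measure" where
  "D_minus \<eta> \<sigma> K = gauss_iso (\<chi> i. - \<eta>) \<sigma>"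

definition nat_risk :: "real \<Rightarrow> real \<Rightarrow> real \<Rightarrow> real^'d \<Rightarrow> real \<Rightarrow> real" where
  "nat_risk \<eta> \<sigma> K w b =
     1/2 * measure (D_minus \<eta> \<sigma> K) {x. lin_clf w b x = 1}
   + 1/2 * measure (D_plus \<eta> \<sigma> K) {x. lin_clf w b x = -1}"

end

theory Submission
  imports Defs
begin

lemma Basis_vec_range: "(Basis :: (real^'d) set) = range (\<lambda>i. axis i 1)"
  by (auto simp: Basis_vec_def)

lemma inj_axis1: "inj (\<lambda>i::'d::finite. axis i (1::real))"
  by (auto simp: inj_def axis_eq_axis)

lemma prod_Basis_vec:
  fixes h :: "real^'d \<Rightarrow> 'b::comm_monoid_mult"
  shows "(\<Prod>b\<in>Basis. h b) = (\<Prod>i\<in>UNIV. h (axis i 1))"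
  unfolding Basis_vec_range by (subst prod.reindex[OF inj_axis1]) simp

lemma vec_nth_measurable[measurable]: "(\<lambda>x::real^'d. x $ i) \<in> borel_measurable borel"
  by (intro borel_measurable_continuous_onI continuous_intros)

lemma gauss_prod:
  fixes m :: "real^'d" and A :: "'d \<Rightarrow> real set"
  assumes s: "s > 0" and A[measurable]: "\<And>i. A i \<in> sets borel"
  shows "emeasure (gauss_iso m s) {x. \<forall>i. x$i \<in> A i}
     = (\<Prod>i\<in>UNIV. \<integral>\<^sup>+t. ennreal (normal_density (m$i) s t) * indicator (A i) t \<partial>lborel)"
proof -
  define ib where "ib b = (SOME i. b = axis i (1::real))" for b :: "real^'d"
  have ib: "ib (axis i 1) = i" for i
    unfolding ib_def by (rule some_equality) (auto simp: axis_eq_axis)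
  define F where "F b t = ennreal (normal_density (m$(ib b)) s t) * indicator (A (ib b)) t" for b t
  have S: "{x. \<forall>i. x$i \<in> A i} \<in> sets (lborel :: (real^'d) measure)"
  proof -
    have "{x. \<forall>i. x$i \<in> A i} = (\<Inter>i. (\<lambda>x::real^'d. x$i) -` A i)" by auto
    also have "\<dots> \<in> sets borel" by (intro sets.countable_INT) (auto intro: measurable_sets_borel[OF vec_nth_measurable])
    finally show ?thesis by simp
  qed
  have "emeasure (gauss_iso m s) {x. \<forall>i. x$i \<in> A i}
      = (\<integral>\<^sup>+x. ennreal (\<Prod>i\<in>UNIV. normal_density (m$i) s (x$i)) * indicator {x. \<forall>i. x$i \<in> A i} x \<partial>lborel)"
    unfolding gauss_iso_def by (rule emeasure_density[OF _ S]) simp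
  also have "\<dots> = (\<integral>\<^sup>+x. (\<Prod>b\<in>Basis. F b (x \<bullet> b)) \<partial>lborel)"
  proof (rule nn_integral_cong)
    fix x :: "real^'d"
    have "(\<Prod>b\<in>Basis. F b (x \<bullet> b)) = (\<Prod>i\<in>UNIV. F (axis i 1) (x \<bullet> axis i 1))"
      by (rule prod_Basis_vec)
    also have "\<dots> = (\<Prod>i\<in>UNIV. ennreal (normal_density (m$i) s (x$i)) * indicator (A i) (x$i))"
      by (simp add: F_def ib inner_axis)
    also have "\<dots> = ennreal (\<Prod>i\<in>UNIV. normal_density (m$i) s (x$i)) * indicator {x. \<forall>i. x$i \<in> A i} x"
      by (simp add: prod.distrib prod_ennreal indicator_def prod.If_cases)
    finally show "ennreal (\<Prod>i\<in>UNIV. normal_density (m$i) s (x$i)) * indicator {x. \<forall>i. x$i \<in> A i} x = (\<Prod>b\<in>Basis. F b (x \<bullet> b))" by simp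
  qed
  also have "\<dots> = (\<Prod>b\<in>Basis. \<integral>\<^sup>+t. F b t \<partial>lborel)"
    by (rule nn_integral_lborel_prod) (auto simp: F_def)
  also have "\<dots> = (\<Prod>i\<in>UNIV. \<integral>\<^sup>+t. F (axis i 1) t \<partial>lborel)"
    by (rule prod_Basis_vec)
  finally show ?thesis by (simp add: F_def ib)
qed

lemma nn_integral_normal_density_1: "s > 0 \<Longrightarrow> (\<integral>\<^sup>+t. ennreal (normal_density \<mu> s t) \<partial>lborel) = 1"
  by (subst nn_integral_eq_integral) auto

lemma gauss_prob:
  assumes s: "s > 0"
  shows "prob_space (gauss_iso (m::real^'d) s)"
proof
  have "space (gauss_iso m s) = {x. \<forall>i. x$i \<in> (UNIV::real set)}"
    by (simp add: gauss_iso_def)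
  then show "emeasure (gauss_iso m s) (space (gauss_iso m s)) = 1"
    using gauss_prod[OF s, of "\<lambda>_. UNIV" m] by (simp add: nn_integral_normal_density_1[OF s])
qed

lemma gauss_coord:
  assumes s: "s > 0"
  shows "distributed (gauss_iso (m::real^'d) s) lborel (\<lambda>x. x$i) (normal_density (m$i) s)"
  unfolding distributed_def
proof (intro conjI)
  show "(\<lambda>x. x$i) \<in> measurable (gauss_iso m s) lborel"
    by (simp add: gauss_iso_def)
  show "(\<lambda>x. ennreal (normal_density (m $ i) s x)) \<in> borel_measurable lborel" by simp
  show "distr (gauss_iso m s) lborel (\<lambda>x. x$i) = density lborel (normal_density (m$i) s)"
  proof (rule measure_eqI)
    show "sets (distr (gauss_iso m s) lborel (\<lambda>x. x$i)) = sets (density lborel (normal_density (m$i) s))" by simp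
    fix A assume A: "A \<in> sets (distr (gauss_iso m s) lborel (\<lambda>x. x$i))"
    then have A': "A \<in> sets borel" by simp
    have "emeasure (distr (gauss_iso m s) lborel (\<lambda>x. x$i)) A
        = emeasure (gauss_iso m s) ((\<lambda>x. x$i) -` A \<inter> space (gauss_iso m s))"
      using A by (intro emeasure_distr) (auto simp: gauss_iso_def)
    also have "(\<lambda>x. x$i) -` A \<inter> space (gauss_iso m s) = {x. \<forall>j. x$j \<in> (if j = i then A else UNIV)}"
      by (auto simp: gauss_iso_def)
    also have "emeasure (gauss_iso m s) \<dots> = (\<Prod>j\<in>UNIV. \<integral>\<^sup>+t. ennreal (normal_density (m$j) s t) * indicator (if j = i then A else UNIV) t \<partial>lborel)"
      using A' by (intro gauss_prod[OF s]) auto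
    also have "\<dots> = (\<integral>\<^sup>+t. ennreal (normal_density (m$i) s t) * indicator A t \<partial>lborel)"
      by (subst prod.remove[of _ i]) (auto simp: nn_integral_normal_density_1[OF s] intro!: prod.neutral)
    also have "\<dots> = emeasure (density lborel (normal_density (m$i) s)) A"
      using A' by (subst emeasure_density) auto
    finally show "emeasure (distr (gauss_iso m s) lborel (\<lambda>x. x$i)) A = emeasure (density lborel (normal_density (m$i) s)) A" .
  qed
qed

lemma gauss_indep:
  assumes s: "s > 0"
  shows "prob_space.indep_vars (gauss_iso (m::real^'d) s) (\<lambda>_. borel) (\<lambda>i x. x$i) UNIV"
proof -
  let ?M = "gauss_iso m s"
  interpret prob_space ?M by (rule gauss_prob[OF s])
  have rv: "random_variable borel (\<lambda>x. x$i)" for i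
    by (simp add: gauss_iso_def)
  have sf: "sigma_finite_measure (distr ?M borel (\<lambda>x. x$i))" for i
    using prob_space_distr[OF rv] by (simp add: prob_space_imp_sigma_finite)
  interpret ps: product_sigma_finite "\<lambda>i. distr ?M borel (\<lambda>x. x$i)"
    by (simp add: product_sigma_finite_def sf)
  show ?thesis
  proof (subst indep_vars_iff_distr_eq_PiM[OF _ rv])
    show "(UNIV::'d set) \<noteq> {}" by simp
    show "distr ?M (\<Pi>\<^sub>M i\<in>UNIV. borel) (\<lambda>x. \<lambda>i\<in>UNIV. x$i) = (\<Pi>\<^sub>M i\<in>UNIV. distr ?M borel (\<lambda>x. x$i))"
    proof (rule ps.PiM_eqI)
      show "finite (UNIV::'d set)" by simp
      show "sets (distr ?M (\<Pi>\<^sub>M i\<in>UNIV. borel) (\<lambda>x. \<lambda>i\<in>UNIV. x$i)) = sets (\<Pi>\<^sub>M i\<in>UNIV. distr ?M borel (\<lambda>x. x$i))"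
        by (simp cong: sets_PiM_cong)
      fix A assume A: "\<And>i. i \<in> UNIV \<Longrightarrow> A i \<in> sets (distr ?M borel (\<lambda>x. x$i))"
      then have A': "\<And>i. A i \<in> sets borel" by simp
      have sing: "emeasure (distr ?M borel (\<lambda>x. x$i)) (A i) = (\<integral>\<^sup>+t. ennreal (normal_density (m$i) s t) * indicator (A i) t \<partial>lborel)" for i
      proof -
        have "emeasure (distr ?M borel (\<lambda>x. x$i)) (A i) = emeasure ?M ((\<lambda>x. x$i) -` A i \<inter> space ?M)"
          using A' by (intro emeasure_distr) (auto simp: gauss_iso_def)
        also have "\<dots> = (\<integral>\<^sup>+t. ennreal (normal_density (m$i) s t) * indicator (A i) t \<partial>lborel)"
          using distributed_emeasure[OF gauss_coord[OF s, of m i], of "A i"] A' by simp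
        finally show ?thesis .
      qed
      have "emeasure (distr ?M (\<Pi>\<^sub>M i\<in>UNIV. borel) (\<lambda>x. \<lambda>i\<in>UNIV. x$i)) (Pi\<^sub>E UNIV A)
          = emeasure ?M ((\<lambda>x. \<lambda>i\<in>UNIV. x$i) -` Pi\<^sub>E UNIV A \<inter> space ?M)"
        using A' by (intro emeasure_distr) (auto simp: gauss_iso_def)
      also have "(\<lambda>x. \<lambda>i\<in>UNIV. x$i) -` Pi\<^sub>E UNIV A \<inter> space ?M = {x. \<forall>i. x$i \<in> A i}"
        by (auto simp: gauss_iso_def)
      also have "emeasure ?M \<dots> = (\<Prod>i\<in>UNIV. emeasure (distr ?M borel (\<lambda>x. x$i)) (A i))"
        by (simp add: gauss_prod[OF s A'] sing)
      finally show "emeasure (distr ?M (\<Pi>\<^sub>M i\<in>UNIV. borel) (\<lambda>x. \<lambda>i\<in>UNIV. x$i)) (Pi\<^sub>E UNIV A) = (\<Prod>i\<in>UNIV. emeasure (distr ?M borel (\<lambda>x. x$i)) (A i))" .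
    qed
  qed
qed

lemma gauss_lin:
  assumes s: "s > 0" and w: "w \<noteq> 0"
  shows "distributed (gauss_iso (m::real^'d) s) lborel (\<lambda>x. w \<bullet> x) (normal_density (w \<bullet> m) (s * norm w))"
proof -
  let ?M = "gauss_iso m s"
  interpret prob_space ?M by (rule gauss_prob[OF s])
  define I where "I = {i. w$i \<noteq> 0}"
  have I: "finite I" "I \<noteq> {}" using w by (auto simp: I_def vec_eq_iff)
  have ind: "indep_vars (\<lambda>_. borel) (\<lambda>i x. w$i * x$i) I"
    using indep_vars_compose2[OF indep_vars_subset[OF gauss_indep[OF s, of m], of I], of "\<lambda>i t. w$i * t" "\<lambda>_. borel"]
    by simp
  have nd: "distributed ?M lborel (\<lambda>x. w$i * x$i) (normal_density (w$i * m$i) (\<bar>w$i\<bar> * s))" if "i \<in> I" for i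
    using normal_density_affine[OF gauss_coord[OF s, of m i] s, of "w$i" 0] that by (simp add: I_def)
  have "distributed ?M lborel (\<lambda>x. \<Sum>i\<in>I. w$i * x$i) (normal_density (\<Sum>i\<in>I. w$i * m$i) (sqrt (\<Sum>i\<in>I. (\<bar>w$i\<bar> * s)\<^sup>2)))"
    by (rule sum_indep_normal[OF I ind _ nd]) (use s in \<open>auto simp: I_def\<close>)
  moreover have "(\<lambda>x. \<Sum>i\<in>I. w$i * x$i) = (\<lambda>x. w \<bullet> x)"
    by (auto simp: inner_vec_def I_def intro!: sum.mono_neutral_left)
  moreover have "(\<Sum>i\<in>I. w$i * m$i) = w \<bullet> m"
    by (auto simp: inner_vec_def I_def intro!: sum.mono_neutral_left)
  moreover have "sqrt (\<Sum>i\<in>I. (\<bar>w$i\<bar> * s)\<^sup>2) = s * norm w"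
  proof -
    have "(\<Sum>i\<in>I. (\<bar>w$i\<bar> * s)\<^sup>2) = s\<^sup>2 * (\<Sum>i\<in>UNIV. (w$i)\<^sup>2)"
      by (auto simp: I_def power_mult_distrib sum_distrib_left mult.commute intro!: sum.mono_neutral_left)
    then show ?thesis using s by (simp add: norm_vec_def L2_set_def real_sqrt_mult)
  qed
  ultimately show ?thesis by simp
qed

definition Nstd :: "real measure" where "Nstd = density lborel std_normal_density"
definition Fn :: "real \<Rightarrow> real" where "Fn c = measure Nstd {..<c}"

lemma Nstd_prob: "prob_space Nstd"
  unfolding Nstd_def by (rule prob_space_normal_density) simp

lemma sets_Nstd[simp]: "sets Nstd = sets borel"
  by (simp add: Nstd_def)

lemma Nstd_single: "measure Nstd {c} = 0"
proof -
  have "emeasure Nstd {c} = (\<integral>\<^sup>+x. ennreal (std_normal_density x) * indicator {c} x \<partial>lborel)"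
    unfolding Nstd_def by (rule emeasure_density) auto
  also have "\<dots> = (\<integral>\<^sup>+x. ennreal (std_normal_density c) * indicator {c} x \<partial>lborel)"
    by (rule nn_integral_cong) (auto simp: indicator_def)
  also have "\<dots> = 0" by (subst nn_integral_cmult_indicator) auto
  finally show ?thesis by (simp add: measure_def)
qed

lemma Fn_diff:
  assumes "c1 \<le> c2"
  shows "Fn c2 - Fn c1 = measure Nstd {c1..<c2}"
proof -
  interpret prob_space Nstd by (rule Nstd_prob)
  have "measure Nstd ({..<c2} - {..<c1}) = measure Nstd {..<c2} - measure Nstd {..<c1}"
    using assms by (intro finite_measure_Diff) auto
  moreover have "{..<c2} - {..<c1} = {c1..<c2}" by auto
  ultimately show ?thesis by (simp add: Fn_def)
qed

lemma emeasure_Nstd_Ico: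
  "emeasure Nstd {c1..<c2} = (\<integral>\<^sup>+x. ennreal (std_normal_density x) * indicator {c1..<c2} x \<partial>lborel)"
  unfolding Nstd_def by (rule emeasure_density) auto

lemma Fn_lower:
  assumes "c1 \<le> c2" "0 \<le> L" "\<And>z. c1 \<le> z \<Longrightarrow> z \<le> c2 \<Longrightarrow> L \<le> std_normal_density z"
  shows "(c2 - c1) * L \<le> Fn c2 - Fn c1"
proof -
  interpret prob_space Nstd by (rule Nstd_prob)
  have "ennreal ((c2 - c1) * L) = (\<integral>\<^sup>+x. ennreal L * indicator {c1..<c2} x \<partial>lborel)"
    using assms by (subst nn_integral_cmult_indicator) (auto simp: ennreal_mult mult.commute)
  also have "\<dots> \<le> (\<integral>\<^sup>+x. ennreal (std_normal_density x) * indicator {c1..<c2} x \<partial>lborel)"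
    using assms by (intro nn_integral_mono) (auto simp: indicator_def)
  also have "\<dots> = ennreal (measure Nstd {c1..<c2})"
    by (simp add: emeasure_Nstd_Ico[symmetric] emeasure_eq_measure)
  finally show ?thesis using Fn_diff[OF assms(1)] by (simp add: ennreal_le_iff)
qed

lemma Fn_upper:
  assumes "c1 \<le> c2" "\<And>z. c1 \<le> z \<Longrightarrow> z \<le> c2 \<Longrightarrow> std_normal_density z \<le> U"
  shows "Fn c2 - Fn c1 \<le> (c2 - c1) * U"
proof -
  interpret prob_space Nstd by (rule Nstd_prob)
  have U: "0 \<le> U" using assms(2)[of c1] assms(1) normal_density_nonneg[of 0 1 c1] by linarith
  have "ennreal (measure Nstd {c1..<c2}) = (\<integral>\<^sup>+x. ennreal (std_normal_density x) * indicator {c1..<c2} x \<partial>lborel)"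
    by (simp add: emeasure_Nstd_Ico[symmetric] emeasure_eq_measure)
  also have "\<dots> \<le> (\<integral>\<^sup>+x. ennreal U * indicator {c1..<c2} x \<partial>lborel)"
    using assms by (intro nn_integral_mono) (auto simp: indicator_def intro!: ennreal_leI)
  also have "\<dots> = ennreal ((c2 - c1) * U)"
    using assms U by (subst nn_integral_cmult_indicator) (auto simp: ennreal_mult mult.commute)
  finally show ?thesis using Fn_diff[OF assms(1)] U assms(1) by (simp add: ennreal_le_iff)
qed

lemma Fn_strict_mono:
  assumes "c1 < c2" shows "Fn c1 < Fn c2"
proof -
  define L where "L = 1 / sqrt (2 * pi) * exp (- (c1\<^sup>2 + c2\<^sup>2) / 2)"
  have L: "0 < L" by (simp add: L_def)
  have "L \<le> std_normal_density z" if "c1 \<le> z" "z \<le> c2" for z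
  proof -
    have "z\<^sup>2 \<le> c1\<^sup>2 + c2\<^sup>2"
    proof (cases "z \<ge> 0")
      case True then have "z\<^sup>2 \<le> c2\<^sup>2" using that by (intro power_mono) auto
      then show ?thesis by (smt (verit) zero_le_power2)
    next
      case False then have "(-z)\<^sup>2 \<le> (-c1)\<^sup>2" using that by (intro power_mono) auto
      then show ?thesis by (smt (verit) zero_le_power2 power2_minus)
    qed
    then show ?thesis unfolding L_def std_normal_density_def by (intro mult_left_mono) auto
  qed
  then have "(c2 - c1) * L \<le> Fn c2 - Fn c1" using assms L by (intro Fn_lower) auto
  moreover have "0 < (c2 - c1) * L" using assms L by simp
  ultimately show ?thesis by simp
qed

lemma Fn_mono: "c1 \<le> c2 \<Longrightarrow> Fn c1 \<le> Fn c2"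
  using Fn_strict_mono[of c1 c2] by (cases "c1 = c2") auto

lemma Fn_symm: "Fn (- c) = 1 - Fn c"
proof -
  interpret prob_space Nstd by (rule Nstd_prob)
  have id: "distributed Nstd lborel (\<lambda>x. x) std_normal_density"
    unfolding distributed_def by (auto simp: distr_id2 intro: measurable_ident_sets) (simp add: Nstd_def)
  have "distributed Nstd lborel (\<lambda>x. 0 + (-1) * x) (normal_density (0 + (-1) * 0) (\<bar>-1\<bar> * 1))"
    by (rule normal_density_affine[OF id]) auto
  then have neg: "distr Nstd lborel uminus = Nstd"
    by (simp add: distributed_def Nstd_def)
  have "Fn (- c) = measure (distr Nstd lborel uminus) {..<-c}"
    by (simp add: neg Fn_def)
  also have "\<dots> = measure Nstd (uminus -` {..<-c} \<inter> space Nstd)"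
    by (rule measure_distr) (auto simp: Nstd_def)
  also have "uminus -` {..<-c} \<inter> space Nstd = {c<..}" by (auto simp: Nstd_def)
  also have "measure Nstd {c<..} = 1 - measure Nstd {..c}"
  proof -
    have "measure Nstd (space Nstd - {..c}) = 1 - measure Nstd {..c}"
      by (rule prob_compl) auto
    moreover have "space Nstd - {..c} = {c<..}" by (auto simp: Nstd_def)
    ultimately show ?thesis by simp
  qed
  also have "measure Nstd {..c} = Fn c"
  proof -
    have "measure Nstd ({..<c} \<union> {c}) = measure Nstd {..<c} + measure Nstd {c}"
      by (rule finite_measure_Union) auto
    moreover have "{..<c} \<union> {c} = {..c}" by auto
    ultimately show ?thesis by (simp add: Nstd_single Fn_def)
  qed
  finally show ?thesis .
qed

lemma gauss_half:
  assumes s: "s > 0" and w: "w \<noteq> 0"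
  shows "measure (gauss_iso (m::real^'d) s) {x. w \<bullet> x + b < 0} = Fn ((- b - w \<bullet> m) / (s * norm w))"
proof -
  let ?M = "gauss_iso m s"
  interpret prob_space ?M by (rule gauss_prob[OF s])
  have sn: "s * norm w > 0" using s w by simp
  have "distributed ?M lborel (\<lambda>x. (w \<bullet> x - w \<bullet> m) / (s * norm w)) std_normal_density"
    using gauss_lin[OF s w, of m] normal_standard_normal_convert[OF sn] by simp
  then have d: "distr ?M lborel (\<lambda>x. (w \<bullet> x - w \<bullet> m) / (s * norm w)) = Nstd"
    and meas: "(\<lambda>x. (w \<bullet> x - w \<bullet> m) / (s * norm w)) \<in> measurable ?M lborel"
    by (auto simp: distributed_def Nstd_def)
  have "Fn ((- b - w \<bullet> m) / (s * norm w)) = measure (distr ?M lborel (\<lambda>x. (w \<bullet> x - w \<bullet> m) / (s * norm w))) {..<(- b - w \<bullet> m) / (s * norm w)}"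
    by (simp add: d Fn_def)
  also have "\<dots> = measure ?M ((\<lambda>x. (w \<bullet> x - w \<bullet> m) / (s * norm w)) -` {..<(- b - w \<bullet> m) / (s * norm w)} \<inter> space ?M)"
    by (rule measure_distr[OF meas]) auto
  also have "(\<lambda>x. (w \<bullet> x - w \<bullet> m) / (s * norm w)) -` {..<(- b - w \<bullet> m) / (s * norm w)} \<inter> space ?M = {x. w \<bullet> x + b < 0}"
    using sn by (auto simp: gauss_iso_def divide_less_cancel)
  finally show ?thesis by simp
qed

lemma snd_anti: "a\<^sup>2 \<le> c\<^sup>2 \<Longrightarrow> std_normal_density c \<le> std_normal_density a"
  unfolding std_normal_density_def by (intro mult_left_mono) auto

lemma lin_sets:
  "{x. lin_clf w b x = -1} = {x. w \<bullet> x + b < 0}"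
  "{x. lin_clf w b x = 1} = UNIV - {x. w \<bullet> x + b < 0}"
  by (auto simp: lin_clf_def)

lemma prob_pos:
  assumes s: "s > 0"
  shows "measure (gauss_iso (m::real^'d) s) {x. lin_clf w b x = 1} = 1 - measure (gauss_iso m s) {x. w \<bullet> x + b < 0}"
proof -
  interpret prob_space "gauss_iso m s" by (rule gauss_prob[OF s])
  have sp: "space (gauss_iso m s) = UNIV" by (simp add: gauss_iso_def)
  show ?thesis unfolding lin_sets using prob_compl[of "{x. w \<bullet> x + b < 0}"]
    by (simp add: sp gauss_iso_def)
qed

lemma risk_formula:
  fixes w :: "real^'d" and \<eta> \<sigma> K b :: real
  assumes \<sigma>: "\<sigma> > 0" and K: "K > 1" and w: "w \<noteq> 0"
  defines "T \<equiv> w \<bullet> (\<chi> i. \<eta>)"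
  shows "measure (D_minus \<eta> \<sigma> K) {x. lin_clf w b x = -1} = Fn ((T - b) / (\<sigma> * norm w))"
    and "measure (D_plus \<eta> \<sigma> K) {x. lin_clf w b x = 1} = 1 - Fn ((- b - T) / ((K * \<sigma>) * norm w))"
    and "nat_risk \<eta> \<sigma> K w b = 1/2 * (1 - Fn ((T - b) / (\<sigma> * norm w))) + 1/2 * Fn ((- b - T) / ((K * \<sigma>) * norm w))"
proof -
  have Ks: "K * \<sigma> > 0" using \<sigma> K by simp
  have neg: "w \<bullet> (\<chi> i. - \<eta>) = - T"
  proof -
    have "(\<chi> i. - \<eta>) = - (\<chi> i. \<eta>)" by (simp add: vec_eq_iff)
    then show ?thesis unfolding T_def by (metis inner_minus_right)
  qed
  show 1: "measure (D_minus \<eta> \<sigma> K) {x. lin_clf w b x = -1} = Fn ((T - b) / (\<sigma> * norm w))"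
    unfolding lin_sets D_minus_def using gauss_half[OF \<sigma> w, of "\<chi> i. - \<eta>" b] by (simp add: neg)
  show 2: "measure (D_plus \<eta> \<sigma> K) {x. lin_clf w b x = 1} = 1 - Fn ((- b - T) / ((K * \<sigma>) * norm w))"
    unfolding D_plus_def prob_pos[OF Ks] using gauss_half[OF Ks w, of "\<chi> i. \<eta>" b] by (simp add: T_def)
  have 3: "measure (D_minus \<eta> \<sigma> K) {x. lin_clf w b x = 1} = 1 - Fn ((T - b) / (\<sigma> * norm w))"
    unfolding D_minus_def prob_pos[OF \<sigma>] using gauss_half[OF \<sigma> w, of "\<chi> i. - \<eta>" b] by (simp add: neg)
  have 4: "measure (D_plus \<eta> \<sigma> K) {x. lin_clf w b x = -1} = Fn ((- b - T) / ((K * \<sigma>) * norm w))"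
    unfolding lin_sets D_plus_def using gauss_half[OF Ks w, of "\<chi> i. \<eta>" b] by (simp add: T_def)
  show "nat_risk \<eta> \<sigma> K w b = 1/2 * (1 - Fn ((T - b) / (\<sigma> * norm w))) + 1/2 * Fn ((- b - T) / ((K * \<sigma>) * norm w))"
    unfolding nat_risk_def 3 4 ..
qed

lemma risk_zero:
  assumes \<sigma>: "\<sigma> > 0" and K: "K > 1"
  shows "nat_risk \<eta> \<sigma> K (0::real^'d) b = 1/2"
proof -
  have Ks: "K * \<sigma> > 0" using \<sigma> K by simp
  interpret m: prob_space "D_minus \<eta> \<sigma> K :: (real^'d) measure" unfolding D_minus_def by (rule gauss_prob[OF \<sigma>])
  interpret p: prob_space "D_plus \<eta> \<sigma> K :: (real^'d) measure" unfolding D_plus_def by (rule gauss_prob[OF Ks])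
  have spm: "space (D_minus \<eta> \<sigma> K :: (real^'d) measure) = UNIV" by (simp add: D_minus_def gauss_iso_def)
  have spp: "space (D_plus \<eta> \<sigma> K :: (real^'d) measure) = UNIV" by (simp add: D_plus_def gauss_iso_def)
  show ?thesis
  proof (cases "b \<ge> 0")
    case True
    then have "{x::real^'d. lin_clf 0 b x = 1} = UNIV" "{x::real^'d. lin_clf 0 b x = -1} = {}"
      by (auto simp: lin_clf_def)
    then show ?thesis unfolding nat_risk_def using m.prob_space p.prob_space by (simp add: spm spp)
  next
    case False
    then have "{x::real^'d. lin_clf 0 b x = 1} = {}" "{x::real^'d. lin_clf 0 b x = -1} = UNIV"
      by (auto simp: lin_clf_def)
    then show ?thesis unfolding nat_risk_def using m.prob_space p.prob_space by (simp add: spm spp)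
  qed
qed

lemma risk_good:
  assumes \<eta>: "\<eta> > 0" and \<sigma>: "\<sigma> > 0" and K: "K > 1"
  shows "nat_risk \<eta> \<sigma> K (\<chi> i::'d::finite. 1) 0 < 1/2"
proof -
  let ?w = "\<chi> i::'d. (1::real)"
  have w: "?w \<noteq> 0" by (simp add: vec_eq_iff)
  define T where "T = ?w \<bullet> (\<chi> i. \<eta>)"
  have T: "T > 0" using \<eta> by (simp add: T_def inner_vec_def)
  have n: "norm ?w > 0" using w by simp
  have "(- 0 - T) / ((K * \<sigma>) * norm ?w) < 0" using T n \<sigma> K by (simp add: divide_neg_pos)
  moreover have "0 < (T - 0) / (\<sigma> * norm ?w)" using T n \<sigma> by simp
  ultimately have "Fn ((- 0 - T) / ((K * \<sigma>) * norm ?w)) < Fn ((T - 0) / (\<sigma> * norm ?w))"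
    by (intro Fn_strict_mono) linarith
  then show ?thesis unfolding risk_formula(3)[OF \<sigma> K w, of \<eta> 0, folded T_def] by (simp add: field_simps)
qed

theorem mainTheorem1:
  fixes \<eta> \<sigma> K b :: real and w :: "real^'d"
  assumes "\<eta> > 0" and "\<sigma> > 0" and "K > 1"
    and "\<forall>(w'::real^'d) b'. nat_risk \<eta> \<sigma> K w b \<le> nat_risk \<eta> \<sigma> K w' b'"
  shows "measure (D_minus \<eta> \<sigma> K) {x. lin_clf w b x = -1}
           > measure (D_plus \<eta> \<sigma> K) {x. lin_clf w b x = 1}"
proof (rule ccontr)
  note \<eta> = assms(1) and \<sigma> = assms(2) and K = assms(3) and opt = assms(4)
  assume neg: "\<not> ?thesis"
  have good: "nat_risk \<eta> \<sigma> K w b < 1/2"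
    using opt risk_good[OF \<eta> \<sigma> K] by (meson le_less_trans)
  have w: "w \<noteq> 0"
  proof
    assume "w = 0"
    moreover have "nat_risk \<eta> \<sigma> K (0::real^'d) b = 1/2" by (rule risk_zero[OF \<sigma> K])
    ultimately show False using good by simp
  qed
  define n where "n = norm w"
  define T where "T = w \<bullet> (\<chi> i. \<eta>)"
  define u where "u = (T - b) / (\<sigma> * n)"
  define v where "v = (b + T) / ((K * \<sigma>) * n)"
  have n: "n > 0" using w by (simp add: n_def)
  have Kp: "K > 0" using K by simp
  have mv: "(- b - T) / ((K * \<sigma>) * n) = - v" unfolding v_def by (simp add: diff_divide_distrib add_divide_distrib)
  have Pm: "measure (D_minus \<eta> \<sigma> K) {x. lin_clf w b x = -1} = Fn u"
    using risk_formula(1)[OF \<sigma> K w, of \<eta> b] by (simp add: u_def T_def n_def)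
  have Pp: "measure (D_plus \<eta> \<sigma> K) {x. lin_clf w b x = 1} = Fn v"
    using risk_formula(2)[OF \<sigma> K w, of \<eta> b] mv Fn_symm[of v] by (simp add: T_def n_def)
  have R: "nat_risk \<eta> \<sigma> K w b = 1/2 * (1 - Fn u) + 1/2 * (1 - Fn v)"
    using risk_formula(3)[OF \<sigma> K w, of \<eta> b] mv Fn_symm[of v] by (simp add: u_def T_def n_def)
  have le: "Fn u \<le> Fn v" using neg Pm Pp by simp
  have "1/2 * (1 - Fn u) + 1/2 * (1 - Fn v) < 1/2" using good R by simp
  then have sum1: "Fn u + Fn v > 1" by (simp add: field_simps)
  have uv: "u + v > 0"
  proof (rule ccontr)
    assume "\<not> u + v > 0"
    then have "Fn u \<le> Fn (- v)" by (intro Fn_mono) simp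
    then show False using sum1 Fn_symm[of v] by simp
  qed
  have uv2: "u \<le> v"
  proof (rule ccontr)
    assume "\<not> u \<le> v"
    then have "Fn v < Fn u" by (intro Fn_strict_mono) simp
    then show False using le by simp
  qed
  have v: "v > 0" using uv uv2 by simp
  define Q where "Q = v * (K + 1) + K\<^sup>2"
  have Q: "Q > 0" using v Kp by (simp add: Q_def add_pos_pos)
  have lnK: "ln K > 0" using K by simp
  define \<epsilon> where "\<epsilon> = min v (min 1 (ln K / (2 * Q)))"
  have e: "\<epsilon> > 0" "\<epsilon> \<le> v" "\<epsilon> \<le> 1" "\<epsilon> \<le> ln K / (2 * Q)"
    using v lnK Q by (auto simp: \<epsilon>_def)
  define D where "D = ((v + K * \<epsilon>)\<^sup>2 - (v - \<epsilon>)\<^sup>2) / 2"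
  have D1: "D \<le> \<epsilon> * Q"
  proof -
    have "D = v * \<epsilon> * (K + 1) + \<epsilon>\<^sup>2 * (K\<^sup>2 - 1) / 2"
      by (simp add: D_def power2_eq_square field_simps)
    also have "\<epsilon>\<^sup>2 * (K\<^sup>2 - 1) / 2 \<le> \<epsilon> * K\<^sup>2"
    proof -
      have "\<epsilon>\<^sup>2 \<le> \<epsilon>" using e by (simp add: power2_eq_square mult_le_cancel_left1)
      then have "\<epsilon>\<^sup>2 * (K\<^sup>2 - 1) \<le> \<epsilon> * (K\<^sup>2 - 1)" using one_le_power[of K 2] K by (intro mult_right_mono) auto
      moreover have "\<epsilon> * (K\<^sup>2 - 1) \<le> 2 * (\<epsilon> * K\<^sup>2)" using e by (simp add: algebra_simps)
      ultimately show ?thesis by simp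
    qed
    finally show ?thesis by (simp add: Q_def algebra_simps)
  qed
  have D2: "\<epsilon> * Q \<le> ln K / 2"
    using e(4) Q by (simp add: field_simps)
  have DK: "exp D < K"
  proof -
    have "D < ln K" using D1 D2 lnK by simp
    then have "exp D < exp (ln K)" by simp
    then show ?thesis using Kp by simp
  qed
  have key: "std_normal_density (v - \<epsilon>) < K * std_normal_density (v + K * \<epsilon>)"
  proof -
    have "exp (- (v - \<epsilon>)\<^sup>2 / 2) = exp D * exp (- (v + K * \<epsilon>)\<^sup>2 / 2)"
      unfolding D_def mult_exp_exp by (rule arg_cong[where f=exp]) (simp add: field_simps)
    also have "\<dots> < K * exp (- (v + K * \<epsilon>)\<^sup>2 / 2)" using DK by simp
    finally show ?thesis unfolding std_normal_density_def by (simp add: divide_strict_right_mono)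
  qed
  define b' where "b' = b - K * \<epsilon> * \<sigma> * n"
  have u': "(T - b') / (\<sigma> * n) = u + K * \<epsilon>"
    using \<sigma> n by (simp add: b'_def u_def field_simps)
  have v': "(- b' - T) / ((K * \<sigma>) * n) = - v + \<epsilon>"
    using \<sigma> n Kp by (simp add: b'_def v_def field_simps)
  have R': "nat_risk \<eta> \<sigma> K w b' = 1/2 * (1 - Fn (u + K * \<epsilon>)) + 1/2 * Fn (- v + \<epsilon>)"
    using risk_formula(3)[OF \<sigma> K w, of \<eta> b'] u' v' by (simp add: T_def n_def)
  have gain: "(K * \<epsilon>) * std_normal_density (v + K * \<epsilon>) \<le> Fn (u + K * \<epsilon>) - Fn u"
  proof -
    have "((u + K * \<epsilon>) - u) * std_normal_density (v + K * \<epsilon>) \<le> Fn (u + K * \<epsilon>) - Fn u"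
    proof (rule Fn_lower)
      show "u \<le> u + K * \<epsilon>" using e Kp by simp
      show "0 \<le> std_normal_density (v + K * \<epsilon>)" by simp
      fix z assume z: "u \<le> z" "z \<le> u + K * \<epsilon>"
      have "\<bar>z\<bar> \<le> \<bar>v + K * \<epsilon>\<bar>" using z uv uv2 e Kp by auto
      then have "z\<^sup>2 \<le> (v + K * \<epsilon>)\<^sup>2" by (simp add: abs_le_square_iff)
      then show "std_normal_density (v + K * \<epsilon>) \<le> std_normal_density z" by (rule snd_anti)
    qed
    then show ?thesis by simp
  qed
  have loss: "Fn (- v + \<epsilon>) - Fn (- v) \<le> \<epsilon> * std_normal_density (v - \<epsilon>)"
  proof -
    have "Fn (- v + \<epsilon>) - Fn (- v) \<le> ((- v + \<epsilon>) - (- v)) * std_normal_density (v - \<epsilon>)"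
    proof (rule Fn_upper)
      show "- v \<le> - v + \<epsilon>" using e by simp
      fix z assume z: "- v \<le> z" "z \<le> - v + \<epsilon>"
      have "\<bar>v - \<epsilon>\<bar> \<le> \<bar>z\<bar>" using z e by auto
      then have "(v - \<epsilon>)\<^sup>2 \<le> z\<^sup>2" by (simp add: abs_le_square_iff)
      then show "std_normal_density z \<le> std_normal_density (v - \<epsilon>)" by (rule snd_anti)
    qed
    then show ?thesis by simp
  qed
  have "\<epsilon> * std_normal_density (v - \<epsilon>) < \<epsilon> * (K * std_normal_density (v + K * \<epsilon>))"
    using key e by simp
  then have "Fn (- v + \<epsilon>) - Fn (- v) < Fn (u + K * \<epsilon>) - Fn u"
    using gain loss by (simp add: algebra_simps)
  moreover have "nat_risk \<eta> \<sigma> K w b' - nat_risk \<eta> \<sigma> K w b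
      = 1/2 * ((Fn (- v + \<epsilon>) - Fn (- v)) - (Fn (u + K * \<epsilon>) - Fn u))"
    unfolding R R' Fn_symm[of v] by (simp add: field_simps)
  ultimately have "nat_risk \<eta> \<sigma> K w b' < nat_risk \<eta> \<sigma> K w b"
    by simp
  then show False using opt by (meson not_le)
qed

end
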